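(* Let $\ell\ge2$, $C\subseteq\mathbb{F}_q^n$ a linear code and $(A,B)$ an $\ell$-power $t$-error locating pair for $C$. Let $\mathbf{y}=\mathbf{c}+\mathbf{e}$ with $\mathbf{c}\in C$, $\mathrm{w}(\mathbf{e})=t$, $I_{\mathbf{e}}=\mathrm{supp}(\mathbf{e})$, and for $i=1,\dots,\ell$ let $\mathbf{e}^{(i)}=\sum_{h=1}^{i}\binom{i}{h}\mathbf{c}^{i-h}*\mathbf{e}^{h}$ (so that $\mathbf{y}^i=\mathbf{c}^i+\mathbf{e}^{(i)}$). Let $M_1=\{\mathbf{a}\in A\mid \langle \mathbf{a}*\mathbf{y},\mathbf{b}\rangle=0\ \forall \mathbf{b}\in B\}$, $M_i=\{\mathbf{a}\in A\mid \langle \mathbf{a}*\mathbf{y}^i,\mathbf{v}\rangle=0\ \forall \mathbf{v}\in (B^{\perp}*C^{i-1})^{\perp}\}$ for $2\le i\le\ell$, and $M=\bigcap_{i=1}^\ell M_i$. Then $$M_{I_{\mathbf{e}}}=\big((\mathbf{e}^{(1)}*B)_{I_{\mathbf{e}}}\big)^{\perp}\cap\bigcap_{i=2}^{\ell}\big((\mathbf{e}^{(i)}*(B^\perp*C^{i-1})^\perp)_{I_{\mathbf{e}}}\big)^{\perp},$$ with duals taken in $\mathbb{F}_q^{|I_{\mathbf{e}}|}$.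
   Context: All codes are $\mathbb{F}_q$-linear subspaces of $\mathbb{F}_q^n$. $\mathbf{u}*\mathbf{v}=(u_1v_1,\dots,u_nv_n)$, $\mathbf{u}^i=(u_1^i,\dots,u_n^i)$ with $\mathbf{u}^0=(1,\dots,1)$; $A*B$ is the span of all $\mathbf{a}*\mathbf{b}$; $C^1=C$, $C^i=C*C^{i-1}$; $\mathbf{u}*X=\{\mathbf{u}*\mathbf{x}:\mathbf{x}\in X\}$. $\langle\mathbf{u},\mathbf{v}\rangle=\sum_iu_iv_i$, $X^\perp$ the dual. $\mathrm{w}$ Hamming weight, $\mathrm{d}$ minimum distance, $\mathrm{supp}(\mathbf{x})=\{i:x_i\ne0\}$. For $J=\{j_1<\dots<j_s\}$, $X_J=\{(x_{j_1},\dots,x_{j_s}):\mathbf{x}\in X\}$. A pair $(A,B)$ is an $\ell$-power $t$-error locating pair for $C$ if: (1) $A*B\subseteq C^\perp$; (2) $\dim A>t$; (3) $\mathrm{d}(A^\perp)>t$; (4) $\mathrm{d}(A)+\mathrm{d}(C)>n$; (5) $\dim B+\sum_{i=2}^{\ell}\dim (B^\perp*C^{i-1})^\perp\ge t$. *)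

theory Defs
  imports Main "HOL-Library.Extended_Nat"
begin

text \<open>Vectors of F_q^n are modelled as functions nat => 'a vanishing outside {..<n}.\<close>

definition vecs :: "nat \<Rightarrow> (nat \<Rightarrow> 'a::field) set" where
  "vecs n = {x. \<forall>i. n \<le> i \<longrightarrow> x i = 0}"

definition is_code :: "nat \<Rightarrow> (nat \<Rightarrow> 'a::field) set \<Rightarrow> bool" where
  "is_code n X \<longleftrightarrow> X \<subseteq> vecs n \<and> (\<lambda>_. 0) \<in> X \<and>
     (\<forall>x\<in>X. \<forall>y\<in>X. (\<lambda>i. x i + y i) \<in> X) \<and>
     (\<forall>c. \<forall>x\<in>X. (\<lambda>i. c * x i) \<in> X)"

definition lspan :: "nat \<Rightarrow> (nat \<Rightarrow> 'a::field) set \<Rightarrow> (nat \<Rightarrow> 'a) set" where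
  "lspan n S = \<Inter>{V. is_code n V \<and> S \<subseteq> V}"

definition cdim :: "nat \<Rightarrow> (nat \<Rightarrow> 'a::field) set \<Rightarrow> nat" where
  "cdim n X = (LEAST k. \<exists>S. finite S \<and> card S = k \<and> S \<subseteq> X \<and> lspan n S = X)"

definition star :: "(nat \<Rightarrow> 'a::field) \<Rightarrow> (nat \<Rightarrow> 'a) \<Rightarrow> (nat \<Rightarrow> 'a)" where
  "star u v = (\<lambda>i. u i * v i)"

definition vpow :: "nat \<Rightarrow> (nat \<Rightarrow> 'a::field) \<Rightarrow> nat \<Rightarrow> (nat \<Rightarrow> 'a)" where
  "vpow n u k = (\<lambda>j. if j < n then u j ^ k else 0)"

definition starset :: "nat \<Rightarrow> (nat \<Rightarrow> 'a::field) set \<Rightarrow> (nat \<Rightarrow> 'a) set \<Rightarrow> (nat \<Rightarrow> 'a) set" where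
  "starset n A B = lspan n {star a b | a b. a \<in> A \<and> b \<in> B}"

fun cpow :: "nat \<Rightarrow> (nat \<Rightarrow> 'a::field) set \<Rightarrow> nat \<Rightarrow> (nat \<Rightarrow> 'a) set" where
  "cpow n C 0 = lspan n {vpow n (\<lambda>_. 0) 0}"
| "cpow n C (Suc 0) = C"
| "cpow n C (Suc (Suc k)) = starset n C (cpow n C (Suc k))"

definition inner_n :: "nat \<Rightarrow> (nat \<Rightarrow> 'a::field) \<Rightarrow> (nat \<Rightarrow> 'a) \<Rightarrow> 'a" where
  "inner_n n u v = (\<Sum>i<n. u i * v i)"

definition dual :: "nat \<Rightarrow> (nat \<Rightarrow> 'a::field) set \<Rightarrow> (nat \<Rightarrow> 'a) set" where
  "dual n X = {x \<in> vecs n. \<forall>y\<in>X. inner_n n x y = 0}"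

definition weight :: "nat \<Rightarrow> (nat \<Rightarrow> 'a::field) \<Rightarrow> nat" where
  "weight n x = card {i. i < n \<and> x i \<noteq> 0}"

definition supp :: "nat \<Rightarrow> (nat \<Rightarrow> 'a::field) \<Rightarrow> nat set" where
  "supp n x = {i. i < n \<and> x i \<noteq> 0}"

text \<open>Minimum distance; the zero code has minimum distance infinity.\<close>
definition mindist :: "nat \<Rightarrow> (nat \<Rightarrow> 'a::field) set \<Rightarrow> enat" where
  "mindist n X = (INF x \<in> X - {\<lambda>_. 0}. enat (weight n x))"

text \<open>Puncturing X_J: keep coordinates in J (others set to 0); F_q^{|J|} is
  identified with functions vanishing outside J.\<close>
definition punct :: "nat set \<Rightarrow> (nat \<Rightarrow> 'a::field) set \<Rightarrow> (nat \<Rightarrow> 'a) set" where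
  "punct J X = (\<lambda>x. \<lambda>j. if j \<in> J then x j else 0) ` X"

definition dual_on :: "nat set \<Rightarrow> (nat \<Rightarrow> 'a::field) set \<Rightarrow> (nat \<Rightarrow> 'a) set" where
  "dual_on J X = {x. (\<forall>j. j \<notin> J \<longrightarrow> x j = 0) \<and> (\<forall>y\<in>X. (\<Sum>j\<in>J. x j * y j) = 0)}"

definition Wsp :: "nat \<Rightarrow> (nat \<Rightarrow> 'a::field) set \<Rightarrow> (nat \<Rightarrow> 'a) set \<Rightarrow> nat \<Rightarrow> (nat \<Rightarrow> 'a) set" where
  "Wsp n C B i = dual n (starset n (dual n B) (cpow n C (i - 1)))"

definition power_ELP ::
  "nat \<Rightarrow> (nat \<Rightarrow> 'a::field) set \<Rightarrow> (nat \<Rightarrow> 'a) set \<Rightarrow> (nat \<Rightarrow> 'a) set \<Rightarrow> nat \<Rightarrow> nat \<Rightarrow> bool" where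
  "power_ELP n C A B l t \<longleftrightarrow>
     is_code n A \<and> is_code n B \<and>
     starset n A B \<subseteq> dual n C \<and>
     cdim n A > t \<and>
     mindist n (dual n A) > enat t \<and>
     mindist n A + mindist n C > enat n \<and>
     cdim n B + (\<Sum>i=2..l. cdim n (Wsp n C B i)) \<ge> t"

definition epow :: "nat \<Rightarrow> (nat \<Rightarrow> 'a::field) \<Rightarrow> (nat \<Rightarrow> 'a) \<Rightarrow> nat \<Rightarrow> (nat \<Rightarrow> 'a)" where
  "epow n c e i = (\<lambda>j. \<Sum>h=1..i. of_nat (i choose h) * vpow n c (i - h) j * vpow n e h j)"

end

theory Submission
  imports Defs
begin

definition fsub :: "nat set \<Rightarrow> (nat \<Rightarrow> 'a::field) set \<Rightarrow> bool" where
  "fsub J V \<longleftrightarrow> (\<forall>v\<in>V. \<forall>j. j \<notin> J \<longrightarrow> v j = 0) \<and> (\<lambda>_. 0) \<in> V \<and>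
     (\<forall>u\<in>V. \<forall>v\<in>V. (\<lambda>i. u i + v i) \<in> V) \<and> (\<forall>a. \<forall>v\<in>V. (\<lambda>i. a * v i) \<in> V)"

lemma sep:
  assumes "finite J"
  shows "fsub J V \<Longrightarrow> \<forall>j. j \<notin> J \<longrightarrow> x j = 0 \<Longrightarrow> x \<notin> V \<Longrightarrow>
    \<exists>z. (\<forall>j. j \<notin> J \<longrightarrow> z j = 0) \<and> (\<forall>v\<in>V. (\<Sum>j\<in>J. z j * v j) = 0) \<and> (\<Sum>j\<in>J. z j * x j) \<noteq> 0"
  using assms
proof (induction J arbitrary: V x rule: finite_induct)
  case empty
  then have "x = (\<lambda>_. 0)" by auto
  with empty show ?case by (auto simp: fsub_def)
next
  case (insert k J)
  note fs = insert.prems(1)[unfolded fsub_def]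
  have add: "\<And>u v. u \<in> V \<Longrightarrow> v \<in> V \<Longrightarrow> (\<lambda>i. u i + v i) \<in> V" using fs by blast
  have smul: "\<And>a v. v \<in> V \<Longrightarrow> (\<lambda>i. a * v i) \<in> V" using fs by blast
  show ?case
  proof (cases "\<exists>v0\<in>V. v0 k \<noteq> 0")
    case True
    then obtain v0 where v0: "v0 \<in> V" "v0 k \<noteq> 0" by blast
    define w where "w = (\<lambda>i. (1 / v0 k) * v0 i)"
    have wV: "w \<in> V" using smul[OF v0(1)] unfolding w_def by blast
    have wk: "w k = 1" using v0 by (simp add: w_def)
    define V0 where "V0 = {v \<in> V. v k = 0}"
    have fs0: "fsub J V0" unfolding fsub_def V0_def using fs by auto
    have proj: "(\<lambda>i. v i - v k * w i) \<in> V" if "v \<in> V" for v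
    proof -
      have "(\<lambda>i. v i + (- v k) * w i) \<in> V" using add[OF that smul[OF wV, of "- v k"]] by simp
      then show ?thesis by simp
    qed
    have proj0: "(\<lambda>i. v i - v k * w i) \<in> V0" if "v \<in> V" for v
      using proj[OF that] wk by (simp add: V0_def)
    define x' where "x' = (\<lambda>i. x i - x k * w i)"
    have x'out: "\<forall>j. j \<notin> J \<longrightarrow> x' j = 0"
    proof (intro allI impI)
      fix j assume j: "j \<notin> J"
      show "x' j = 0"
      proof (cases "j = k")
        case True then show ?thesis using wk by (simp add: x'_def)
      next
        case False then show ?thesis using j insert.prems(2) fs wV by (auto simp: x'_def)
      qed
    qed
    have x'nV0: "x' \<notin> V0"
    proof
      assume "x' \<in> V0"
      then have "x' \<in> V" by (simp add: V0_def)
      then have "(\<lambda>i. x' i + x k * w i) \<in> V" using add smul[OF wV] by blast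
      then have "x \<in> V" by (simp add: x'_def)
      with insert.prems(3) show False by simp
    qed
    obtain z' where z': "\<forall>j. j \<notin> J \<longrightarrow> z' j = 0" "\<forall>v\<in>V0. (\<Sum>j\<in>J. z' j * v j) = 0"
      "(\<Sum>j\<in>J. z' j * x' j) \<noteq> 0"
      using insert.IH[OF fs0 x'out x'nV0] by blast
    define S where "S = (\<Sum>j\<in>J. z' j * w j)"
    define z where "z = z'(k := - S)"
    have zJ: "(\<Sum>j\<in>J. z j * u j) = (\<Sum>j\<in>J. z' j * u j)" for u
      using insert.hyps(2) by (intro sum.cong) (auto simp: z_def)
    have key: "(\<Sum>j\<in>insert k J. z j * u j) = (\<Sum>j\<in>J. z' j * (u j - u k * w j))" for u
    proof -
      have "(\<Sum>j\<in>insert k J. z j * u j) = - S * u k + (\<Sum>j\<in>J. z' j * u j)"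
        using insert.hyps zJ by (simp add: z_def)
      also have "\<dots> = (\<Sum>j\<in>J. z' j * u j) - u k * S" by (simp add: algebra_simps)
      also have "\<dots> = (\<Sum>j\<in>J. z' j * (u j - u k * w j))"
        by (simp add: S_def right_diff_distrib sum_subtractf sum_distrib_left algebra_simps)
      finally show ?thesis .
    qed
    show ?thesis
    proof (intro exI conjI ballI allI impI)
      fix j assume "j \<notin> insert k J" then show "z j = 0" using z' by (auto simp: z_def)
    next
      fix v assume "v \<in> V"
      then show "(\<Sum>j\<in>insert k J. z j * v j) = 0" using key[of v] z'(2) proj0 by simp
    next
      show "(\<Sum>j\<in>insert k J. z j * x j) \<noteq> 0" using key[of x] z'(3) by (simp add: x'_def)
    qed
  next
    case False
    then have vk: "\<forall>v\<in>V. v k = 0" by blast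
    show ?thesis
    proof (cases "x k = 0")
      case True
      have fs1: "fsub J V" unfolding fsub_def
        using fs vk by (metis insertE)
      have "\<forall>j. j \<notin> J \<longrightarrow> x j = 0" using True insert.prems(2) by auto
      then obtain z' where z': "\<forall>j. j \<notin> J \<longrightarrow> z' j = 0" "\<forall>v\<in>V. (\<Sum>j\<in>J. z' j * v j) = 0"
        "(\<Sum>j\<in>J. z' j * x j) \<noteq> 0"
        using insert.IH[OF fs1 _ insert.prems(3)] by blast
      show ?thesis
        apply (rule exI[of _ z'])
        using z' insert.hyps vk True by auto
    next
      case False
      define z where "z = (\<lambda>i. if i = k then (1::'a) else 0)"
      have s: "(\<Sum>j\<in>insert k J. z j * u j) = u k" for u
        using insert.hyps by (simp add: z_def, intro sum.neutral, auto)
      show ?thesis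
        apply (rule exI[of _ z])
        using s vk False by (auto simp: z_def)
    qed
  qed
qed


lemma lspan_sup: "S \<subseteq> lspan n S"
  unfolding lspan_def by blast

lemma p1: "(\<lambda>_. 0) \<in> A \<Longrightarrow> (\<lambda>_. 0::'a::field) \<in> punct I A"
  unfolding punct_def by (rule image_eqI[where x="\<lambda>_. 0"]) auto
lemma p4: "v \<in> punct I A \<Longrightarrow> j \<notin> I \<Longrightarrow> v j = 0" unfolding punct_def by (elim imageE) simp
lemma p5: "u \<in> punct I A \<Longrightarrow> \<exists>a\<in>A. u = (\<lambda>j. if j \<in> I then a j else 0)"
  unfolding punct_def by (elim imageE) (rule bexI)
lemma p6: "a \<in> A \<Longrightarrow> u = (\<lambda>j. if j \<in> I then a j else 0) \<Longrightarrow> u \<in> punct I A"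
  unfolding punct_def by (rule image_eqI)
lemma fsl: assumes A: "is_code n A" shows "fsub I (punct I A)"
proof -
  have z: "(\<lambda>_. 0) \<in> A" using A by (simp add: is_code_def)
  have 2: "(\<lambda>i. u i + v i) \<in> punct I A" if uv: "u \<in> punct I A" "v \<in> punct I A" for u v
  proof -
    obtain a where a: "a \<in> A" "u = (\<lambda>j. if j \<in> I then a j else 0)" using p5[OF uv(1)] by blast
    obtain b where b: "b \<in> A" "v = (\<lambda>j. if j \<in> I then b j else 0)" using p5[OF uv(2)] by blast
    have "(\<lambda>i. a i + b i) \<in> A" using A a b by (simp add: is_code_def)
    then show ?thesis by (rule p6) (simp add: a b fun_eq_iff)
  qed
  have 3: "(\<lambda>i. r * v i) \<in> punct I A" if vv: "v \<in> punct I A" for r v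
  proof -
    obtain b where b: "b \<in> A" "v = (\<lambda>j. if j \<in> I then b j else 0)" using p5[OF vv] by blast
    have "(\<lambda>i. r * b i) \<in> A" using A b by (simp add: is_code_def)
    then show ?thesis by (rule p6) (simp add: b fun_eq_iff)
  qed
  show ?thesis unfolding fsub_def
    apply (intro conjI)
       apply (intro ballI allI impI, erule (1) p4)
      apply (rule p1[OF z])
     apply (intro ballI, rule 2, assumption+)
    apply (intro allI ballI, rule 3, assumption)
    done
qed
lemma punct_surj:
  fixes A :: "(nat \<Rightarrow> 'a::field) set"
  assumes A: "is_code n A" and md: "mindist n (dual n A) > enat t"
    and I: "I \<subseteq> {..<n}" and cI: "card I \<le> t"
    and x: "\<forall>j. j \<notin> I \<longrightarrow> x j = 0"
  shows "x \<in> punct I A"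
proof (rule ccontr)
  assume nx: "x \<notin> punct I A"
  have fI: "finite I" using I finite_subset by blast
  have fs: "fsub I (punct I A)" by (rule fsl[OF A])
  obtain z where z: "\<forall>j. j \<notin> I \<longrightarrow> z j = 0" "\<forall>v\<in>punct I A. (\<Sum>j\<in>I. z j * v j) = 0"
    "(\<Sum>j\<in>I. z j * x j) \<noteq> 0" using sep[OF fI fs x nx] by (elim exE conjE) blast
  have zn: "z \<noteq> (\<lambda>_. 0)" using z(3) by auto
  have zv: "z \<in> vecs n" using z(1) I by (auto simp: vecs_def)
  have sumI: "inner_n n z a = (\<Sum>j\<in>I. z j * a j)" for a
    unfolding inner_n_def
    by (rule sum.mono_neutral_right) (use I z(1) in auto)
  have zd: "z \<in> dual n A"
  proof -
    have "inner_n n z a = 0" if "a \<in> A" for a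
    proof -
      have "(\<lambda>j. if j \<in> I then a j else 0) \<in> punct I A" using that by (rule p6) simp
      then have "(\<Sum>j\<in>I. z j * (\<lambda>j. if j \<in> I then a j else 0) j) = 0" by (rule bspec[OF z(2)])
      then show ?thesis unfolding sumI by simp
    qed
    then show ?thesis using zv by (simp add: dual_def)
  qed
  have "weight n z \<le> card I"
    unfolding weight_def using z(1) fI by (intro card_mono) auto
  then have "weight n z \<le> t" using cI by simp
  moreover have "mindist n (dual n A) \<le> enat (weight n z)"
    unfolding mindist_def using zd zn by (intro INF_lower) auto
  ultimately show False using md by (meson enat_ord_simps(1) leD order_trans)
qed


lemma red:
  assumes I: "I \<subseteq> {..<n}"
    and Y: "\<forall>j<n. Y j = C' j + E j" and E: "\<forall>j<n. j \<notin> I \<longrightarrow> E j = 0"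
    and o: "inner_n n (star a C') v = 0"
  shows "inner_n n (star a Y) v = (\<Sum>j\<in>I. a j * (E j * v j))"
proof -
  have "inner_n n (star a Y) v = (\<Sum>j<n. a j * C' j * v j + a j * (E j * v j))"
    unfolding inner_n_def star_def using Y by (intro sum.cong) (auto simp: algebra_simps)
  also have "\<dots> = inner_n n (star a C') v + (\<Sum>j<n. a j * (E j * v j))"
    by (simp add: sum.distrib inner_n_def star_def)
  also have "(\<Sum>j<n. a j * (E j * v j)) = (\<Sum>j\<in>I. a j * (E j * v j))"
    by (rule sum.mono_neutral_right) (use I E in auto)
  finally show ?thesis using o by simp
qed

lemma vpow_cpow:
  assumes "C \<subseteq> vecs n" "c \<in> C" "k \<ge> 1"
  shows "vpow n c k \<in> cpow n C k"
  using assms(3)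
proof (induction k rule: nat_induct_at_least)
  case base
  have "vpow n c 1 = c"
  proof (rule ext)
    fix j show "vpow n c 1 j = c j" using assms(1,2) by (cases "j < n") (auto simp: vpow_def vecs_def)
  qed
  then show ?case using assms by simp
next
  case (Suc m)
  obtain m' where m: "m = Suc m'" using Suc.hyps by (cases m) auto
  have e: "star c (vpow n c m) = vpow n c (Suc m)"
    unfolding star_def vpow_def by (rule ext) simp
  have "star c (vpow n c m) \<in> {star a b |a b. a \<in> C \<and> b \<in> cpow n C m}"
    using Suc.IH assms(2) by blast
  then have "vpow n c (Suc m) \<in> starset n C (cpow n C m)"
    unfolding starset_def e[symmetric] by (rule subsetD[OF lspan_sup])
  then show ?case unfolding m by simp
qed

lemma dual_on_iff:
  "((\<lambda>j. if j \<in> I then a j else 0) \<in> dual_on I (punct I (star E ` X))) =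
   (\<forall>v\<in>X. (\<Sum>j\<in>I. a j * (E j * v j)) = 0)"
  unfolding dual_on_def punct_def star_def by (auto cong: sum.cong)


lemma binom_split:
  fixes c e :: "'a::field"
  shows "(c + e) ^ i = c ^ i + (\<Sum>h=1..i. of_nat (i choose h) * c ^ (i - h) * e ^ h)"
proof -
  have "(c + e) ^ i = (e + c) ^ i" by (simp add: add.commute)
  also have "\<dots> = (\<Sum>k\<le>i. of_nat (i choose k) * e ^ k * c ^ (i - k))" by (rule binomial_ring)
  also have "{..i} = insert 0 {1..i}" by auto
  also have "(\<Sum>k\<in>insert 0 {1..i}. of_nat (i choose k) * e ^ k * c ^ (i - k)) =
     c ^ i + (\<Sum>k=1..i. of_nat (i choose k) * e ^ k * c ^ (i - k))" by (subst sum.insert) auto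
  finally show ?thesis by (simp add: algebra_simps)
qed

lemma epow_dec:
  assumes "j < n" "y = (\<lambda>j. c j + e j)"
  shows "vpow n y i j = vpow n c i j + epow n c e i j"
  using assms by (simp add: vpow_def epow_def binom_split)

lemma epow1: "j < n \<Longrightarrow> epow n c e 1 j = e j"
  by (simp add: epow_def vpow_def)

lemma epow_zero:
  assumes "j < n" "e j = 0"
  shows "epow n c e i j = 0"
  unfolding epow_def using assms by (intro sum.neutral) (auto simp: vpow_def)


theorem mainTheorem8:
  fixes n l t :: nat and C A B :: "(nat \<Rightarrow> 'a::{field,finite}) set"
    and c e y :: "nat \<Rightarrow> 'a"
  assumes "2 \<le> l"
    and "is_code n C"
    and "power_ELP n C A B l t"
    and "c \<in> C" and "e \<in> vecs n" and "weight n e = t"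
    and "y = (\<lambda>j. c j + e j)"
  defines "I \<equiv> supp n e"
    and "M1 \<equiv> {a \<in> A. \<forall>b\<in>B. inner_n n (star a y) b = 0}"
    and "Mi \<equiv> (\<lambda>i. {a \<in> A. \<forall>v\<in>Wsp n C B i. inner_n n (star a (vpow n y i)) v = 0})"
  shows "punct I (M1 \<inter> (\<Inter>i\<in>{2..l}. Mi i)) =
     dual_on I (punct I (star (epow n c e 1) ` B)) \<inter>
     (\<Inter>i\<in>{2..l}. dual_on I (punct I (star (epow n c e i) ` Wsp n C B i)))"
proof -
  note P = assms(3)[unfolded power_ELP_def]
  have Acode: "is_code n A" and ABC: "starset n A B \<subseteq> dual n C"
    and md: "mindist n (dual n A) > enat t" using P by auto
  have Cv: "C \<subseteq> vecs n" using assms(2) by (simp add: is_code_def)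
  have Av: "A \<subseteq> vecs n" using Acode by (simp add: is_code_def)
  have I: "I \<subseteq> {..<n}" unfolding I_def supp_def by auto
  have cI: "card I = t" using assms(6) unfolding I_def supp_def weight_def by simp
  have Eout: "\<forall>j<n. j \<notin> I \<longrightarrow> epow n c e i j = 0" for i
    using epow_zero unfolding I_def supp_def by blast
  have orth1: "inner_n n (star a c) b = 0" if "a \<in> A" "b \<in> B" for a b
  proof -
    have "star a b \<in> starset n A B" unfolding starset_def
      by (rule subsetD[OF lspan_sup]) (use that in blast)
    then have "star a b \<in> dual n C" using ABC by blast
    then have "inner_n n (star a b) c = 0" using assms(4) by (simp add: dual_def)
    then show ?thesis by (simp add: inner_n_def star_def algebra_simps)
  qed
  have orthi: "inner_n n (star a (vpow n c i)) v = 0"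
    if "a \<in> A" "2 \<le> i" "v \<in> Wsp n C B i" for a i v
  proof -
    have ac: "star a c \<in> dual n B"
      using orth1[OF that(1)] Av that(1) by (auto simp: dual_def vecs_def star_def)
    have cp: "vpow n c (i - 1) \<in> cpow n C (i - 1)"
      using vpow_cpow[OF Cv assms(4)] that(2) by simp
    have "star (star a c) (vpow n c (i - 1)) \<in> starset n (dual n B) (cpow n C (i - 1))"
      unfolding starset_def by (rule subsetD[OF lspan_sup]) (use ac cp in blast)
    then have "inner_n n v (star (star a c) (vpow n c (i - 1))) = 0"
      using that(3) unfolding Wsp_def dual_def by blast
    moreover have "c j ^ i = c j * c j ^ (i - 1)" for j
      using that(2) by (metis Suc_diff_1 less_le_trans pos2 power_Suc)
    ultimately show ?thesis
      by (simp add: inner_n_def star_def vpow_def algebra_simps)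
  qed
  have M1iff: "a \<in> M1 \<longleftrightarrow> a \<in> A \<and> (\<forall>b\<in>B. (\<Sum>j\<in>I. a j * (epow n c e 1 j * b j)) = 0)" for a
  proof -
    have "inner_n n (star a y) b = (\<Sum>j\<in>I. a j * (epow n c e 1 j * b j))" if "a \<in> A" "b \<in> B" for b
      by (rule red[OF I _ Eout orth1[OF that]]) (simp add: assms(7) epow_def vpow_def)
    then show ?thesis unfolding M1_def by auto
  qed
  have Miiff: "a \<in> Mi i \<longleftrightarrow> a \<in> A \<and> (\<forall>v\<in>Wsp n C B i. (\<Sum>j\<in>I. a j * (epow n c e i j * v j)) = 0)"
    if "2 \<le> i" for a i
  proof -
    have "inner_n n (star a (vpow n y i)) v = (\<Sum>j\<in>I. a j * (epow n c e i j * v j))"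
      if "a \<in> A" "v \<in> Wsp n C B i" for v
      by (rule red[OF I _ Eout orthi[OF that(1) \<open>2 \<le> i\<close> that(2)]]) (simp add: assms(7) epow_dec)
    then show ?thesis unfolding Mi_def by auto
  qed
  let ?pf = "\<lambda>a. (\<lambda>j. if j \<in> I then a j else 0)"
  show ?thesis
  proof (intro equalityI subsetI)
    fix x assume "x \<in> punct I (M1 \<inter> (\<Inter>i\<in>{2..l}. Mi i))"
    then obtain a where a0: "a \<in> M1 \<inter> (\<Inter>i\<in>{2..l}. Mi i)" and x: "x = ?pf a"
      using p5 by blast
    then have a: "a \<in> M1" "\<forall>i\<in>{2..l}. a \<in> Mi i" by auto
    show "x \<in> dual_on I (punct I (star (epow n c e 1) ` B)) \<inter>
     (\<Inter>i\<in>{2..l}. dual_on I (punct I (star (epow n c e i) ` Wsp n C B i)))"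
    proof (rule IntI)
      show "x \<in> dual_on I (punct I (star (epow n c e 1) ` B))"
        unfolding x by (rule iffD2[OF dual_on_iff]) (use a(1) M1iff in blast)
      show "x \<in> (\<Inter>i\<in>{2..l}. dual_on I (punct I (star (epow n c e i) ` Wsp n C B i)))"
      proof (rule INT_I)
        fix i assume i: "i \<in> {2..l}"
        then have "a \<in> Mi i" using a(2) by blast
        then have "\<forall>v\<in>Wsp n C B i. (\<Sum>j\<in>I. a j * (epow n c e i j * v j)) = 0"
          using Miiff i by auto
        then show "x \<in> dual_on I (punct I (star (epow n c e i) ` Wsp n C B i))"
          unfolding x by (rule iffD2[OF dual_on_iff])
      qed
    qed
  next
    fix x assume xr: "x \<in> dual_on I (punct I (star (epow n c e 1) ` B)) \<inter>
     (\<Inter>i\<in>{2..l}. dual_on I (punct I (star (epow n c e i) ` Wsp n C B i)))"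
    then have xo: "\<forall>j. j \<notin> I \<longrightarrow> x j = 0" by (simp add: dual_on_def)
    have "x \<in> punct I A" using punct_surj[OF Acode md I _ xo] cI by simp
    then obtain a where a: "a \<in> A" and x: "x = ?pf a" using p5 by blast
    have x1: "?pf a \<in> dual_on I (punct I (star (epow n c e 1) ` B))" using xr x by blast
    have "a \<in> M1" using iffD1[OF dual_on_iff x1] M1iff a by blast
    moreover have "\<forall>i\<in>{2..l}. a \<in> Mi i"
    proof
      fix i assume i: "i \<in> {2..l}"
      then have "?pf a \<in> dual_on I (punct I (star (epow n c e i) ` Wsp n C B i))" using xr x by blast
      then have "\<forall>v\<in>Wsp n C B i. (\<Sum>j\<in>I. a j * (epow n c e i j * v j)) = 0"
        by (rule iffD1[OF dual_on_iff])
      then show "a \<in> Mi i" using Miiff i a by auto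
    qed
    ultimately have "a \<in> M1" "\<forall>i\<in>{2..l}. a \<in> Mi i" by auto
    then show "x \<in> punct I (M1 \<inter> (\<Inter>i\<in>{2..l}. Mi i))"
      unfolding x by (intro p6) auto
  qed
qed

end
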